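(* Let $G$ be a finite simple graph with $n\ge4$ vertices such that every induced subgraph of $G$ on four vertices contains $K_{1,3}$ as a (not necessarily induced) subgraph. Then $G$ contains $K_{n-3}+\epsilon_3$ as a subgraph.
   Context: $K_{1,3}$ is the star with one center and three leaves; $\epsilon_3$ is the graph with three vertices and no edges; $K_{n-3}+\epsilon_3$ is obtained from disjoint copies of the complete graph $K_{n-3}$ and $\epsilon_3$ by adding all edges between them. *)

theory Defs
  imports Main
begin

definition simple_graph :: "'a set \<Rightarrow> ('a \<Rightarrow> 'a \<Rightarrow> bool) \<Rightarrow> bool" where
  "simple_graph V E \<longleftrightarrow> finite V \<and> (\<forall>x y. E x y \<longrightarrow> x \<in> V \<and> y \<in> V)
     \<and> (\<forall>x. \<not> E x x) \<and> (\<forall>x y. E x y \<longrightarrow> E y x)"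

definition contains_subgraph ::
  "'a set \<Rightarrow> ('a \<Rightarrow> 'a \<Rightarrow> bool) \<Rightarrow> 'b set \<Rightarrow> ('b \<Rightarrow> 'b \<Rightarrow> bool) \<Rightarrow> bool" where
  "contains_subgraph V E V' E' \<longleftrightarrow>
     (\<exists>f. inj_on f V' \<and> f ` V' \<subseteq> V \<and> (\<forall>x\<in>V'. \<forall>y\<in>V'. E' x y \<longrightarrow> E (f x) (f y)))"

definition induced :: "('a \<Rightarrow> 'a \<Rightarrow> bool) \<Rightarrow> 'a set \<Rightarrow> 'a \<Rightarrow> 'a \<Rightarrow> bool" where
  "induced E S x y \<longleftrightarrow> x \<in> S \<and> y \<in> S \<and> E x y"

definition K13_verts :: "nat set" where "K13_verts = {0, 1, 2, 3}"
definition K13_adj :: "nat \<Rightarrow> nat \<Rightarrow> bool" where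
  "K13_adj x y \<longleftrightarrow> x \<in> K13_verts \<and> y \<in> K13_verts \<and> x \<noteq> y \<and> (x = 0 \<or> y = 0)"

text \<open>K_{n-3} + eps_3 on vertex set {0..<n}: vertices 0,1,2 form the
independent set eps_3, vertices 3..n-1 form K_{n-3}, and all edges between
the two parts are present.\<close>

definition join_verts :: "nat \<Rightarrow> nat set" where "join_verts n = {0..<n}"
definition join_adj :: "nat \<Rightarrow> nat \<Rightarrow> nat \<Rightarrow> bool" where
  "join_adj n x y \<longleftrightarrow> x < n \<and> y < n \<and> x \<noteq> y \<and> \<not> (x < 3 \<and> y < 3)"

end

theory Submission
  imports Defs
begin

lemma center4:
  assumes sg: "simple_graph V E"
    and H: "\<forall>S. S \<subseteq> V \<and> card S = 4 \<longrightarrow> contains_subgraph S (induced E S) K13_verts K13_adj"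
    and abcd: "a \<in> V" "b \<in> V" "c \<in> V" "d \<in> V"
    and dist: "a \<noteq> b" "a \<noteq> c" "a \<noteq> d" "b \<noteq> c" "b \<noteq> d" "c \<noteq> d"
  shows "\<exists>v\<in>{a,b,c,d}. \<forall>w\<in>{a,b,c,d}. w \<noteq> v \<longrightarrow> E v w"
proof -
  let ?S = "{a,b,c,d}"
  have "card ?S = 4" using dist by auto
  then obtain f where f: "inj_on f K13_verts" "f ` K13_verts \<subseteq> ?S"
    "\<forall>x\<in>K13_verts. \<forall>y\<in>K13_verts. K13_adj x y \<longrightarrow> induced E ?S (f x) (f y)"
  proof -
    have "?S \<subseteq> V" using abcd by auto
    hence "contains_subgraph ?S (induced E ?S) K13_verts K13_adj"
      using H \<open>card ?S = 4\<close> by blast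
    thus ?thesis using that unfolding contains_subgraph_def by blast
  qed
  have cK: "card K13_verts = 4" by (simp add: K13_verts_def)
  have "card (f ` K13_verts) = 4" using f(1) cK card_image by metis
  hence im: "f ` K13_verts = ?S"
    using f(2) \<open>card ?S = 4\<close> by (metis card_subset_eq finite.emptyI finite.insertI)
  have z: "0 \<in> K13_verts" by (simp add: K13_verts_def)
  show ?thesis
  proof (rule bexI[of _ "f 0"])
    show "f 0 \<in> ?S" using im z by blast
    show "\<forall>w\<in>?S. w \<noteq> f 0 \<longrightarrow> E (f 0) w"
    proof (intro ballI impI)
      fix w assume "w \<in> ?S" "w \<noteq> f 0"
      then obtain i where i: "i \<in> K13_verts" "w = f i" using im by (metis imageE)
      with \<open>w \<noteq> f 0\<close> have "i \<noteq> 0" by metis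
      hence "K13_adj 0 i" using i z by (simp add: K13_adj_def)
      thus "E (f 0) w" using f(3) i z by (auto simp: induced_def)
    qed
  qed
qed

lemma cover:
  assumes sg: "simple_graph V E"
    and H: "\<forall>S. S \<subseteq> V \<and> card S = 4 \<longrightarrow> contains_subgraph S (induced E S) K13_verts K13_adj"
  shows "\<exists>C. C \<subseteq> V \<and> card C \<le> 3 \<and> (\<forall>x\<in>V. \<forall>y\<in>V. x \<noteq> y \<and> \<not> E x y \<longrightarrow> x \<in> C \<and> y \<in> C)"
proof -
  have sym: "\<And>x y. E x y \<Longrightarrow> E y x" using sg by (simp add: simple_graph_def)
  have L1: "False" if "a \<in> V" "b \<in> V" "c \<in> V" "d \<in> V"
    "a \<noteq> b" "a \<noteq> c" "a \<noteq> d" "b \<noteq> c" "b \<noteq> d" "c \<noteq> d"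
    "\<not> E a b" "\<not> E c d" for a b c d
    using center4[OF sg H that(1-10)] that sym by (elim bexE) (auto dest: sym)
  have L2: "False" if "a \<in> V" "b \<in> V" "c \<in> V" "d \<in> V"
    "a \<noteq> b" "a \<noteq> c" "a \<noteq> d" "b \<noteq> c" "b \<noteq> d" "c \<noteq> d"
    "\<not> E a b" "\<not> E a c" "\<not> E a d" for a b c d
    using center4[OF sg H that(1-10)] that sym by (elim bexE) (auto dest: sym)
  let ?ne = "\<lambda>x y. x \<in> V \<and> y \<in> V \<and> x \<noteq> y \<and> \<not> E x y"
  show ?thesis
  proof (cases "\<exists>a b. ?ne a b")
    case False
    then show ?thesis by (intro exI[of _ "{}"]) auto
  next
    case True
    then obtain a b where ab: "?ne a b" by blast
    show ?thesis
    proof (cases "\<exists>c. c \<noteq> a \<and> c \<noteq> b \<and> (?ne a c \<or> ?ne b c)")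
      case True
      then obtain c where c: "c \<noteq> a" "c \<noteq> b" "?ne a c \<or> ?ne b c" by blast
      show ?thesis
      proof (intro exI[of _ "{a,b,c}"] conjI ballI impI)
        show "{a,b,c} \<subseteq> V" using ab c by auto
        show "card {a,b,c} \<le> 3" by (simp add: card_insert_le_m1)
        have K: "x \<in> {a,b,c}" if xy: "x \<in> V" "y \<in> V" "x \<noteq> y" "\<not> E x y" for x y
        proof (rule ccontr)
          assume nx: "x \<notin> {a,b,c}"
          consider "y \<notin> {a,b,c}" | "y = a" | "y = b" | "y = c" by blast
          then show False
          proof cases
            case 1 then show False using L1[of x y a b] nx xy ab c by auto
          next
            case 2
            from c(3) show False
            proof
              assume "?ne a c" then show False using L2[of a b c x] nx xy ab c 2 sym by auto
            next
              assume "?ne b c" then show False using L1[of a x b c] nx xy ab c 2 sym by auto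
            qed
          next
            case 3
            from c(3) show False
            proof
              assume "?ne a c" then show False using L1[of b x a c] nx xy ab c 3 sym by auto
            next
              assume "?ne b c" then show False using L2[of b a c x] nx xy ab c 3 sym by auto
            qed
          next
            case 4 then show False using L1[of c x a b] nx xy ab c sym by auto
          qed
        qed
        fix x y assume xy: "x \<in> V" "y \<in> V" "x \<noteq> y \<and> \<not> E x y"
        show "x \<in> {a,b,c}" using K[of x y] xy by blast
        show "y \<in> {a,b,c}" using K[of y x] xy sym by blast
      qed
    next
      case False
      show ?thesis
      proof (intro exI[of _ "{a,b}"] conjI ballI impI)
        show "{a,b} \<subseteq> V" using ab by auto
        show "card {a,b} \<le> 3" by (simp add: card_insert_le_m1)
        fix x y assume xy: "x \<in> V" "y \<in> V" "x \<noteq> y \<and> \<not> E x y"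
        show "x \<in> {a,b}" using L1[of x y a b] False ab xy sym by blast
        show "y \<in> {a,b}" using L1[of x y a b] False ab xy sym by blast
      qed
    qed
  qed
qed

theorem mainTheorem15:
  fixes V :: "'a set" and E :: "'a \<Rightarrow> 'a \<Rightarrow> bool" and n :: nat
  assumes "simple_graph V E"
    and "card V = n" and "n \<ge> 4"
    and "\<forall>S. S \<subseteq> V \<and> card S = 4 \<longrightarrow> contains_subgraph S (induced E S) K13_verts K13_adj"
  shows "contains_subgraph V E (join_verts n) (join_adj n)"
proof -
  have fin: "finite V" using assms(1) by (simp add: simple_graph_def)
  obtain C where C: "C \<subseteq> V" "card C \<le> 3"
    "\<forall>x\<in>V. \<forall>y\<in>V. x \<noteq> y \<and> \<not> E x y \<longrightarrow> x \<in> C \<and> y \<in> C"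
    using cover[OF assms(1) assms(4)] by blast
  have fC: "finite C" using C(1) fin finite_subset by blast
  have "card (V - C) = n - card C" using assms(2) C(1) fC card_Diff_subset by metis
  hence "3 - card C \<le> card (V - C)" using assms(3) C(2) by linarith
  then obtain D where D: "D \<subseteq> V - C" "card D = 3 - card C"
    using obtain_subset_with_card_n by metis
  define T where "T = C \<union> D"
  have fD: "finite D" using D(1) fin finite_subset by blast
  have dj: "C \<inter> D = {}" using D(1) by blast
  have T: "T \<subseteq> V" "card T = 3"
    using C(1,2) D fC fD card_Un_disjoint[OF fC fD dj] by (auto simp: T_def)
  have fT: "finite T" using T fin finite_subset by blast
  have cov: "\<forall>x\<in>V. \<forall>y\<in>V. x \<noteq> y \<and> \<not> E x y \<longrightarrow> x \<in> T \<and> y \<in> T"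
    using C(3) by (auto simp: T_def)
  obtain g where g: "bij_betw g {0..<card T} T" using ex_bij_betw_nat_finite fT by blast
  have fVT: "finite (V - T)" using fin by blast
  obtain h where h: "bij_betw h {0..<card (V - T)} (V - T)"
    using ex_bij_betw_nat_finite fVT by blast
  have cVT: "card (V - T) = n - 3" using T fT assms(2) card_Diff_subset by metis
  define f where "f x = (if x < 3 then g x else h (x - 3))" for x
  have gi: "g x \<in> T" if "x < 3" for x using g that T(2) bij_betwE by fastforce
  have hi: "h (x - 3) \<in> V - T" if "\<not> x < 3" "x < n" for x
    using h that cVT bij_betwE by fastforce
  have ginj: "inj_on g {0..<3}" using g T(2) bij_betw_imp_inj_on by metis
  have hinj: "inj_on h {0..<n-3}" using h cVT bij_betw_imp_inj_on by metis
  show ?thesis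
    unfolding contains_subgraph_def
  proof (intro exI[of _ f] conjI)
    show "inj_on f (join_verts n)"
    proof (rule inj_onI)
      fix x y assume xy: "x \<in> join_verts n" "y \<in> join_verts n" "f x = f y"
      show "x = y"
      proof (cases "x < 3"; cases "y < 3")
        assume "x < 3" "y < 3" thus ?thesis using xy ginj by (auto simp: f_def inj_on_def)
      next
        assume "x < 3" "\<not> y < 3" thus ?thesis using xy gi[of x] hi[of y]
          by (auto simp: f_def join_verts_def)
      next
        assume "\<not> x < 3" "y < 3" thus ?thesis using xy gi[of y] hi[of x]
          by (auto simp: f_def join_verts_def)
      next
        assume a: "\<not> x < 3" "\<not> y < 3"
        hence "h (x-3) = h (y-3)" using xy by (simp add: f_def)
        moreover have "x - 3 \<in> {0..<n-3}" "y - 3 \<in> {0..<n-3}" using a xy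
          by (auto simp: join_verts_def)
        ultimately have "x - 3 = y - 3" using hinj by (meson inj_onD)
        thus ?thesis using a by simp
      qed
    qed
    have fin2: "f x \<in> V" "(f x \<in> T) = (x < 3)" if "x < n" for x
      using gi[of x] hi[of x] that T(1) by (auto simp: f_def)
    show "f ` join_verts n \<subseteq> V" using fin2 by (auto simp: join_verts_def)
    show "\<forall>x\<in>join_verts n. \<forall>y\<in>join_verts n. join_adj n x y \<longrightarrow> E (f x) (f y)"
    proof (intro ballI impI)
      fix x y assume xy: "x \<in> join_verts n" "y \<in> join_verts n" "join_adj n x y"
      have "f x \<noteq> f y" using \<open>inj_on f (join_verts n)\<close> xy by (auto simp: inj_on_def join_adj_def)
      have xn: "x < n" "y < n" "\<not> (x < 3 \<and> y < 3)" using xy(3) by (auto simp: join_adj_def)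
      have "f x \<in> V" "f y \<in> V" "\<not> (f x \<in> T \<and> f y \<in> T)" using fin2 xn by auto
      thus "E (f x) (f y)" using cov \<open>f x \<noteq> f y\<close> by blast
    qed
  qed
qed

end
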